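(* Let $(Y,\rho_Y)$ be a complete separable metric space, $I$ a finite set, $X=Y\times I$, $\bar X=X\times[0,\infty)$. Let $\{\pi_{ij}\}_{i,j\in I}$ be a right stochastic matrix, $\{S_i\}_{i\in I}$ jointly continuous semiflows $S_i:[0,\infty)\times Y\to Y$, $J$ a stochastic kernel on $Y$, and $\lambda>0$. Let $\bar P$ be the stochastic kernel on $\bar X$ $$\bar P((y,i,s),\bar A)=\sum_{j\in I}\pi_{ij}\int_0^\infty\lambda e^{-\lambda t}\int_Y\mathbb{1}_{\bar A}(u,j,t+s)\,J(S_i(t,y),du)\,dt.$$ Let $\Psi=\{(Y(t),\xi(t))\}_{t\geq0}$ be the $X$-valued process such that $\{(Y(\tau_n),\xi(\tau_n),\tau_n)\}_{n\in\mathbb{N}_0}$ is a Markov chain with transition law $\bar P$ and $\tau_0=0$, and $Y(t)=S_{\xi(\tau_n)}(t-\tau_n,Y(\tau_n))$, $\xi(t)=\xi(\tau_n)$ for $t\in[\tau_n,\tau_{n+1})$, $n\in\mathbb{N}_0$; this is a time-homogeneous Markov process, and let $\{P(t)\}_{t\geq0}$ be its transition semigroup. Fix $y^*\in Y$ and put $V(y,i)=\rho_Y(y,y^* )$. Assume: (S1') there exist $M\geq0$, $\zeta\geq0$ with $\max_{i\in I}\rho_Y(S_i(t,y^* ),y^* )\leq Mt^\zeta$ for all $t\geq0$; (S2') there exists $L>0$ with $\rho_Y(S_i(t,y_1),S_i(t,y_2))\leq L\rho_Y(y_1,y_2)$ for all $t\geq0$, $y_1,y_2\in Y$, $i\in I$;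 (J1') there exist $a>0$, $b\geq0$ with $\int_Y\rho_Y^2(u,y^* )\,J(y,du)\leq a\rho_Y^2(y,y^* )+b$ for all $y\in Y$; and $2aL^2<1$. Then there exist $A,B\geq0$ and $\Gamma>0$ such that $P(t)V^2(x)\leq Ae^{-\Gamma t}V^2(x)+B$ for all $x\in X$ and $t\geq0$.
   Context: A semiflow satisfies $S_i(s,S_i(t,y))=S_i(s+t,y)$ and $S_i(0,y)=y$. $P(t)f(x)=\mathbb{E}_{(x,0)}f(\Psi(t))$ for Borel $f\geq0$, where the process starts at $\Psi(0)=x$, $\tau_0=0$. The inter-jump times $\tau_{n}-\tau_{n-1}$ are i.i.d. exponential with rate $\lambda$, so $\tau_n\uparrow\infty$ a.s. *)

theory Defs
  imports "HOL-Probability.Probability"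
begin

definition Xbar_space :: "('y::polish_space \<times> 'i::finite \<times> real) measure" where
  "Xbar_space = borel \<Otimes>\<^sub>M (count_space UNIV \<Otimes>\<^sub>M borel)"

definition Pbar ::
  "('i::finite \<Rightarrow> 'i \<Rightarrow> real) \<Rightarrow> ('i \<Rightarrow> real \<Rightarrow> 'y::polish_space \<Rightarrow> 'y)
   \<Rightarrow> ('y \<Rightarrow> 'y measure) \<Rightarrow> real \<Rightarrow> 'y \<times> 'i \<times> real \<Rightarrow> ('y \<times> 'i \<times> real) measure" where
  "Pbar \<pi> S J lam z = (case z of (y, i, s) \<Rightarrow>
     measure_of (space Xbar_space) (sets Xbar_space)
       (\<lambda>A. \<Sum>j\<in>UNIV. ennreal (\<pi> i j) *
          (\<integral>\<^sup>+ t\<in>{0..}. ennreal (lam * exp (- lam * t)) *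
             (\<integral>\<^sup>+ u. indicator A (u, j, t + s) \<partial>(J (S i t y))) \<partial>lborel)))"

definition markov_chain_kernel ::
  "'w measure \<Rightarrow> ('s measure) \<Rightarrow> ('s \<Rightarrow> 's measure) \<Rightarrow> (nat \<Rightarrow> 'w \<Rightarrow> 's) \<Rightarrow> bool" where
  "markov_chain_kernel M N K Z \<longleftrightarrow>
     (\<forall>n. Z n \<in> measurable M N) \<and>
     (\<forall>n. \<forall>h \<in> borel_measurable (PiM {..n} (\<lambda>_. N)). \<forall>A \<in> sets N.
        (\<integral>\<^sup>+ \<omega>. h (\<lambda>k\<in>{..n}. Z k \<omega>) * indicator A (Z (Suc n) \<omega>) \<partial>M) =
        (\<integral>\<^sup>+ \<omega>. h (\<lambda>k\<in>{..n}. Z k \<omega>) * emeasure (K (Z n \<omega>)) A \<partial>M))"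

text \<open>The piecewise-deterministic process Psi(t) = (Y(t), xi(t)) built from the chain
  Z n = (Y(tau_n), xi(tau_n), tau_n): on [tau_n, tau_(n+1)) it follows the semiflow.\<close>
definition Psi ::
  "('i \<Rightarrow> real \<Rightarrow> 'y \<Rightarrow> 'y) \<Rightarrow> (nat \<Rightarrow> 'w \<Rightarrow> 'y \<times> 'i \<times> real) \<Rightarrow> real \<Rightarrow> 'w \<Rightarrow> 'y \<times> 'i" where
  "Psi S Z t \<omega> = (let n = (LEAST n. t < snd (snd (Z (Suc n) \<omega>))) in
     (case Z n \<omega> of (y, i, s) \<Rightarrow> (S i (t - s) y, i)))"

end

theory Submission
  imports Defs "HOL-Real_Asymp.Real_Asymp"
begin

lemma lin_aux: fixes l X e1 e2 e3 k k2 m bb :: real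
  shows "(- l*X*e2/k - m*e3/k2 - bb*e2) - (- l*X*e1/k - m*e1/k2 - bb) = l*X*(e1-e2)/k + m*(e1-e3)/k2 + bb*(1-e2)"
  by (simp add: diff_divide_distrib add_divide_distrib algebra_simps)

lemma deriv_exp_aux: fixes c k x :: real assumes "k \<noteq> 0"
  shows "DERIV (\<lambda>r. (- c / k) * exp (- k * r)) x :> c * exp (- k * x)"
proof -
  have "DERIV (\<lambda>r. (- c / k) * exp (- k * r)) x :> (- c / k) * (exp (- k * x) * (- k))"
    by (auto intro!: derivative_eq_intros)
  moreover have "(- c / k) * (exp (- k * x) * (- k)) = c * exp (- k * x)" using assms by simp
  ultimately show ?thesis by simp
qed

lemma term_le_suminf: "(f n :: ennreal) \<le> suminf f"
proof -
  have "f n \<le> (\<Sum>k<Suc n. f k)" by (simp add: add_increasing)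
  also have "\<dots> \<le> suminf f" unfolding suminf_eq_SUP by (rule SUP_upper) simp
  finally show ?thesis .
qed

lemma pow_le_exp: fixes x :: real assumes "0 \<le> x" shows "x ^ k / fact k \<le> exp x"
proof -
  have s: "(\<lambda>n. x^n /\<^sub>R fact n) sums exp x" by (rule exp_converges)
  have "(\<Sum>n\<in>{k}. x^n /\<^sub>R fact n) \<le> (\<Sum>n. x^n /\<^sub>R fact n)"
    by (rule sum_le_suminf) (use s assms in \<open>auto simp: sums_iff\<close>)
  then show ?thesis using s by (simp add: sums_iff divide_inverse mult.commute)
qed

lemma powr_exp_bound:
  fixes r \<zeta> \<theta> :: real
  assumes r: "0 \<le> r" and z: "0 \<le> \<zeta>" and th: "0 < \<theta>"
  shows "(r powr \<zeta>)\<^sup>2 \<le> (1 + fact (nat \<lceil>2*\<zeta>\<rceil>) / \<theta> ^ (nat \<lceil>2*\<zeta>\<rceil>)) * exp (\<theta> * r)"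
proof -
  define k where "k = nat \<lceil>2*\<zeta>\<rceil>"
  have sq: "(r powr \<zeta>)\<^sup>2 = r powr (2*\<zeta>)"
    using r by (simp add: power2_eq_square powr_add[symmetric])
  have rk: "r ^ k \<le> fact k / \<theta> ^ k * exp (\<theta> * r)"
  proof -
    have "(\<theta>*r) ^ k / fact k \<le> exp (\<theta>*r)" by (rule pow_le_exp) (use r th in simp)
    then have "\<theta>^k * r^k \<le> fact k * exp (\<theta>*r)"
      by (simp add: power_mult_distrib divide_le_eq mult.commute)
    then show ?thesis using th by (simp add: field_simps)
  qed
  have "r powr (2*\<zeta>) \<le> 1 + r ^ k"
  proof (cases "r \<le> 1")
    case True
    then have "r powr (2*\<zeta>) \<le> 1" using r z by (intro powr_le1) auto
    then show ?thesis by (smt (verit) r zero_le_power)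
  next
    case False
    then have "r powr (2*\<zeta>) \<le> r powr (real k)"
      unfolding k_def by (intro powr_mono) (auto simp: real_nat_ceiling_ge)
    also have "\<dots> = r ^ k" using False by (simp add: powr_realpow)
    finally show ?thesis by simp
  qed
  also have "\<dots> \<le> exp (\<theta> * r) + fact k / \<theta> ^ k * exp (\<theta> * r)"
    using rk r th by (smt (verit) one_le_exp_iff mult_nonneg_nonneg)
  finally show ?thesis unfolding sq k_def by (simp add: algebra_simps)
qed

lemma real_ineq0:
  fixes c E1 E2 E3 \<alpha> \<beta> \<gamma> A B q q' L2 D0 b C1 :: real
  assumes "\<alpha>*(1-q') = L2" "q' = A*q" "\<beta> = \<gamma>*A" "\<gamma>*(A-1) = D0 + \<alpha>*A*b + \<alpha>*B*C1"
    "0 \<le> c" "0 \<le> E2" "E2 \<le> E3" "E3 \<le> E1" "\<alpha> \<ge> 0" "b \<ge> 0" "C1 \<ge> 0" "D0 \<ge> 0" "L2 \<ge> 0" "q' \<ge> 0"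
    "A \<ge> 0" "B \<ge> 0"
  shows "E2*(L2*c) + D0*E3 + (A*(\<alpha>*(q*c + b) - \<gamma>)*(E1-E2) + B*\<alpha>*C1*(E1-E3) + \<beta>*(1-E2))
     \<le> \<alpha>*E1*c + \<beta> - \<gamma>*E1"
proof -
  have id: "\<alpha>*E1*c + \<beta> - \<gamma>*E1 - (E2*(L2*c) + D0*E3 + (A*(\<alpha>*(q*c + b) - \<gamma>)*(E1-E2) + B*\<alpha>*C1*(E1-E3) + \<beta>*(1-E2)))
     = c*(L2*(E1-E2) + q'*\<alpha>*E2) + E1*(\<gamma>*(A-1) - D0 - \<alpha>*A*b - \<alpha>*B*C1)
       + D0*(E1-E3) + A*\<alpha>*b*E2 + B*\<alpha>*C1*E3"
    unfolding assms(1)[symmetric] assms(2) assms(3) by (simp add: algebra_simps)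
  have "0 \<le> c*(L2*(E1-E2) + q'*\<alpha>*E2) + E1*(\<gamma>*(A-1) - D0 - \<alpha>*A*b - \<alpha>*B*C1)
       + D0*(E1-E3) + A*\<alpha>*b*E2 + B*\<alpha>*C1*E3"
    using assms by (intro add_nonneg_nonneg mult_nonneg_nonneg) auto
  with id show ?thesis by linarith
qed

lemma real_ineq:
  fixes c E1 E2 E3 \<alpha> \<beta> \<gamma> \<kappa> \<Gamma> \<theta> lam q q' L2 D0 b C1 :: real
  assumes "lam = \<kappa> + \<Gamma>" "\<kappa> > 0" "\<Gamma> > 0" "\<kappa> - \<theta> > 0" "\<alpha>*(1-q') = L2" "q' = lam*q/\<kappa>"
    "\<beta> = \<gamma>*lam/\<kappa>" "\<gamma>*\<Gamma>/\<kappa> = D0 + \<alpha>*lam*b/\<kappa> + \<alpha>*lam*C1/(\<kappa>-\<theta>)"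
    "0 \<le> c" "0 \<le> E2" "E2 \<le> E3" "E3 \<le> E1" "\<alpha> \<ge> 0" "b \<ge> 0" "C1 \<ge> 0" "D0 \<ge> 0" "L2 \<ge> 0" "q' \<ge> 0"
  shows "E2*(L2*c) + D0*E3 + (lam*(\<alpha>*(q*c + b) - \<gamma>)*(E1-E2)/\<kappa> + lam*\<alpha>*C1*(E1-E3)/(\<kappa>-\<theta>) + \<beta>*(1-E2))
     \<le> \<alpha>*E1*c + \<beta> - \<gamma>*E1"
proof -
  have A1: "lam/\<kappa> - 1 = \<Gamma>/\<kappa>" using assms(1,2) by (simp add: field_simps)
  have H: "E2*(L2*c) + D0*E3 + ((lam/\<kappa>)*(\<alpha>*(q*c + b) - \<gamma>)*(E1-E2) + (lam/(\<kappa>-\<theta>))*\<alpha>*C1*(E1-E3) + \<beta>*(1-E2))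
     \<le> \<alpha>*E1*c + \<beta> - \<gamma>*E1"
  proof (rule real_ineq0[where q'=q'])
    show "q' = lam / \<kappa> * q" using assms(6) by simp
    show "\<beta> = \<gamma> * (lam / \<kappa>)" using assms(7) by simp
    show "\<gamma> * (lam / \<kappa> - 1) = D0 + \<alpha> * (lam / \<kappa>) * b + \<alpha> * (lam / (\<kappa> - \<theta>)) * C1"
      unfolding A1 using assms(8) by (simp add: algebra_simps)
    show "0 \<le> lam/\<kappa>" "0 \<le> lam/(\<kappa>-\<theta>)" using assms(1-4) by auto
  qed (use assms in auto)
  have e1: "lam*(\<alpha>*(q*c + b) - \<gamma>)*(E1-E2)/\<kappa> = (lam/\<kappa>)*(\<alpha>*(q*c + b) - \<gamma>)*(E1-E2)" by simp
  have e2: "lam*\<alpha>*C1*(E1-E3)/(\<kappa>-\<theta>) = (lam/(\<kappa>-\<theta>))*\<alpha>*C1*(E1-E3)" by simp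
  show ?thesis unfolding e1 e2 by (rule H)
qed

locale pdmp =
  fixes \<pi> :: "'i::finite \<Rightarrow> 'i \<Rightarrow> real" and S :: "'i \<Rightarrow> real \<Rightarrow> 'y::polish_space \<Rightarrow> 'y"
    and J :: "'y \<Rightarrow> 'y measure" and lam :: real
  assumes pi_nonneg: "\<And>i j. \<pi> i j \<ge> 0" and pi_sum: "\<And>i. (\<Sum>j\<in>UNIV. \<pi> i j) = 1"
    and S_cont: "\<And>i. continuous_on ({0..} \<times> UNIV) (\<lambda>(t, y). S i t y)"
    and J_kernel: "J \<in> measurable borel (prob_algebra borel)"
    and lam_pos: "lam > 0"
begin

definition Sm where "Sm i r y = S i (max r 0) y"

lemma Sm_cont: "continuous_on UNIV (\<lambda>p. Sm i (fst p) (snd p))"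
proof -
  have "continuous_on UNIV (\<lambda>p. (\<lambda>(t, y). S i t y) (max (fst p) 0, snd p))"
    by (rule continuous_on_compose2[OF S_cont[of i]]) (auto intro!: continuous_intros)
  then show ?thesis by (simp add: Sm_def)
qed

lemma Sm_meas[measurable]: "(\<lambda>p. Sm i (fst p) (snd p)) \<in> measurable (borel \<Otimes>\<^sub>M borel) borel"
  unfolding borel_prod by (rule borel_measurable_continuous_onI[OF Sm_cont])

lemma Jsub[measurable]: "J \<in> measurable borel (subprob_algebra borel)"
  by (rule measurable_prob_algebraD[OF J_kernel])

lemma J_prob: "prob_space (J y)" and J_sets: "sets (J y) = sets borel"
  using measurable_space[OF J_kernel, of y] by (auto simp: space_prob_algebra)

lemma Sm_meas2[measurable]:
  assumes [measurable]: "f \<in> borel_measurable M" "g \<in> measurable M borel"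
  shows "(\<lambda>x. Sm i (f x) (g x)) \<in> measurable M borel"
  using measurable_compose[OF measurable_Pair[OF assms] Sm_meas[of i]] by simp

lemma Xbar_sets: "sets Xbar_space = sets (borel \<Otimes>\<^sub>M (count_space UNIV \<Otimes>\<^sub>M borel))"
  by (simp add: Xbar_space_def)

lemma Xbar_space: "space Xbar_space = UNIV"
  by (simp add: Xbar_space_def space_pair_measure)

definition Kj where "Kj y i s j r = distr (J (Sm i r y)) Xbar_space (\<lambda>v. (v, j, r + s))"
definition "Tm = density lborel (exponential_density lam)"
definition Rj where "Rj y i s j = Tm \<bind> Kj y i s j"
definition Q where "Q y i s = density (count_space UNIV) (\<lambda>j. ennreal (\<pi> i j)) \<bind> Rj y i s"

lemma Tm_prob: "prob_space Tm"
  unfolding Tm_def by (rule prob_space_exponential_density[OF lam_pos])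

lemma Kj_meas: "Kj y i s j \<in> measurable Tm (subprob_algebra Xbar_space)"
proof -
  have "(\<lambda>r. distr (J (Sm i r y)) Xbar_space (\<lambda>v. (v, j, r + s))) \<in> measurable borel (subprob_algebra Xbar_space)"
  proof (rule measurable_distr2)
    show "(\<lambda>(r, v). (v, j, r + s)) \<in> measurable (borel \<Otimes>\<^sub>M borel) Xbar_space"
      unfolding Xbar_space_def by measurable
    show "(\<lambda>r. J (Sm i r y)) \<in> measurable borel (subprob_algebra borel)"
      by measurable
  qed
  then show ?thesis unfolding Kj_def Tm_def
    by (subst measurable_cong_sets[where M'=borel and N'="subprob_algebra Xbar_space"]) auto
qed

lemma Kj_sets: "sets (Kj y i s j r) = sets Xbar_space"
  by (simp add: Kj_def)

lemma Rj_sub: "subprob_space (Rj y i s j)"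
  unfolding Rj_def
  by (rule subprob_space_bind[OF prob_space_imp_subprob_space[OF Tm_prob] Kj_meas])

lemma Rj_sets: "sets (Rj y i s j) = sets Xbar_space"
  unfolding Rj_def by (rule sets_bind) (auto simp: Kj_sets Tm_def)

lemma Rj_meas: "Rj y i s \<in> measurable (density (count_space UNIV) (\<lambda>j. ennreal (\<pi> i j))) (subprob_algebra Xbar_space)"
  by (subst measurable_cong_sets[OF sets_density refl])
     (auto simp: space_subprob_algebra Rj_sub Rj_sets)

lemma Q_sets: "sets (Q y i s) = sets Xbar_space"
  unfolding Q_def by (rule sets_bind) (auto simp: Rj_sets)

lemma Q_integral:
  assumes f[measurable]: "f \<in> borel_measurable Xbar_space"
  shows "(\<integral>\<^sup>+x. f x \<partial>Q y i s) = (\<Sum>j\<in>UNIV. ennreal (\<pi> i j) *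
     (\<integral>\<^sup>+r. ennreal (exponential_density lam r) * (\<integral>\<^sup>+v. f (v, j, r + s) \<partial>J (Sm i r y)) \<partial>lborel))"
proof -
  have "(\<integral>\<^sup>+x. f x \<partial>Q y i s) = (\<integral>\<^sup>+j. (\<integral>\<^sup>+x. f x \<partial>Rj y i s j) \<partial>density (count_space UNIV) (\<lambda>j. ennreal (\<pi> i j)))"
    unfolding Q_def by (rule nn_integral_bind[OF f Rj_meas])
  also have "\<dots> = (\<Sum>j\<in>UNIV. ennreal (\<pi> i j) * (\<integral>\<^sup>+x. f x \<partial>Rj y i s j))"
    by (subst nn_integral_density) (auto simp: nn_integral_count_space_finite)
  also have "\<dots> = (\<Sum>j\<in>UNIV. ennreal (\<pi> i j) *
     (\<integral>\<^sup>+r. ennreal (exponential_density lam r) * (\<integral>\<^sup>+v. f (v, j, r + s) \<partial>J (Sm i r y)) \<partial>lborel))"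
  proof (rule sum.cong[OF refl])
    fix j
    have "(\<integral>\<^sup>+x. f x \<partial>Rj y i s j) = (\<integral>\<^sup>+r. (\<integral>\<^sup>+x. f x \<partial>Kj y i s j r) \<partial>Tm)"
      unfolding Rj_def by (rule nn_integral_bind[OF f Kj_meas])
    also have "\<dots> = (\<integral>\<^sup>+r. ennreal (exponential_density lam r) * (\<integral>\<^sup>+x. f x \<partial>Kj y i s j r) \<partial>lborel)"
      unfolding Tm_def
      apply (subst nn_integral_density)
      using measurable_compose[OF Kj_meas nn_integral_measurable_subprob_algebra[OF f]]
      by (auto simp: Tm_def)
    also have "\<dots> = (\<integral>\<^sup>+r. ennreal (exponential_density lam r) * (\<integral>\<^sup>+v. f (v, j, r + s) \<partial>J (Sm i r y)) \<partial>lborel)"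
      unfolding Kj_def
      apply (rule nn_integral_cong)
      apply (subst nn_integral_distr)
        apply (auto simp: measurable_cong_sets[OF J_sets refl])
      unfolding Xbar_space_def by measurable
    finally show "ennreal (\<pi> i j) * (\<integral>\<^sup>+x. f x \<partial>Rj y i s j) = ennreal (\<pi> i j) *
     (\<integral>\<^sup>+r. ennreal (exponential_density lam r) * (\<integral>\<^sup>+v. f (v, j, r + s) \<partial>J (Sm i r y)) \<partial>lborel)"
      by simp
  qed
  finally show ?thesis .
qed

lemma Tm_int1: "(\<integral>\<^sup>+r. ennreal (exponential_density lam r) \<partial>lborel) = 1"
proof -
  have "emeasure Tm (space Tm) = 1" using Tm_prob by (rule prob_space.emeasure_space_1)
  then show ?thesis by (simp add: Tm_def emeasure_density)
qed

lemma Q_prob: "prob_space (Q y i s)"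
proof
  have "emeasure (Q y i s) (space (Q y i s)) = (\<integral>\<^sup>+x. 1 \<partial>Q y i s)" by simp
  also have "\<dots> = (\<Sum>j\<in>UNIV. ennreal (\<pi> i j))"
    by (subst Q_integral) (auto simp: J_prob prob_space.emeasure_space_1 Tm_int1)
  also have "\<dots> = 1" using pi_sum[of i] pi_nonneg by (simp add: sum_ennreal[symmetric])
  finally show "emeasure (Q y i s) (space (Q y i s)) = 1" .
qed

lemma Pbar_eq: "Pbar \<pi> S J lam (y, i, s) = Q y i s"
proof -
  have eq: "(\<Sum>j\<in>UNIV. ennreal (\<pi> i j) *
          (\<integral>\<^sup>+ t\<in>{0..}. ennreal (lam * exp (- lam * t)) *
             (\<integral>\<^sup>+ u. indicator A (u, j, t + s) \<partial>(J (S i t y))) \<partial>lborel)) = emeasure (Q y i s) A"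
    if A: "A \<in> sets Xbar_space" for A
  proof -
    have "emeasure (Q y i s) A = (\<integral>\<^sup>+x. indicator A x \<partial>Q y i s)"
      using A by (simp add: Q_sets)
    also have "\<dots> = (\<Sum>j\<in>UNIV. ennreal (\<pi> i j) *
     (\<integral>\<^sup>+r. ennreal (exponential_density lam r) * (\<integral>\<^sup>+v. indicator A (v, j, r + s) \<partial>J (Sm i r y)) \<partial>lborel))"
      using A by (intro Q_integral borel_measurable_indicator)
    also have "\<dots> = (\<Sum>j\<in>UNIV. ennreal (\<pi> i j) *
          (\<integral>\<^sup>+ t\<in>{0..}. ennreal (lam * exp (- lam * t)) *
             (\<integral>\<^sup>+ u. indicator A (u, j, t + s) \<partial>(J (S i t y))) \<partial>lborel))"
      apply (rule sum.cong[OF refl])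
      apply (rule arg_cong2[where f="(*)", OF refl])
      apply (rule nn_integral_cong)
      subgoal for j r by (cases "0 \<le> r") (simp_all add: exponential_density_def Sm_def mult_ac)
      done
    finally show ?thesis by simp
  qed
  have "Pbar \<pi> S J lam (y, i, s) = measure_of (space Xbar_space) (sets Xbar_space) (emeasure (Q y i s))"
    unfolding Pbar_def
    by (simp, rule measure_of_eq[OF sets.space_closed]) (use eq in \<open>simp add: sets.sigma_sets_eq\<close>)
  also have "\<dots> = Q y i s"
    using measure_of_of_measure[of "Q y i s"] Q_sets[of y i s] sets_eq_imp_space_eq[OF Q_sets[of y i s]]
    by simp
  finally show ?thesis .
qed

lemma Pbar_sets: "sets (Pbar \<pi> S J lam z) = sets Xbar_space"
  by (cases z) (simp add: Pbar_eq Q_sets)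

lemma Pbar_prob: "prob_space (Pbar \<pi> S J lam z)"
  by (cases z) (simp add: Pbar_eq Q_prob)

lemma Pbar_integral:
  assumes f[measurable]: "f \<in> borel_measurable Xbar_space"
  shows "(\<integral>\<^sup>+x. f x \<partial>Pbar \<pi> S J lam z) = (\<Sum>j\<in>UNIV. ennreal (\<pi> (fst (snd z)) j) *
     (\<integral>\<^sup>+r. ennreal (exponential_density lam r) * (\<integral>\<^sup>+v. f (v, j, r + snd (snd z)) \<partial>J (Sm (fst (snd z)) r (fst z))) \<partial>lborel))"
  by (cases z) (simp add: Pbar_eq Q_integral[OF f])

lemma Xbar_map_meas[measurable]:
  assumes [measurable]: "g \<in> borel_measurable M" "h \<in> measurable M borel"
  shows "(\<lambda>x. (h x, j, g x)) \<in> measurable M Xbar_space"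
  unfolding Xbar_space_def by measurable

lemma Xbar_fst[measurable]: "fst \<in> measurable Xbar_space borel"
  unfolding Xbar_space_def by measurable
lemma Xbar_tau[measurable]: "(\<lambda>z. snd (snd z)) \<in> measurable Xbar_space borel"
  unfolding Xbar_space_def by measurable
lemma Xbar_idx[measurable]: "(\<lambda>z. fst (snd z)) \<in> measurable Xbar_space (count_space UNIV)"
  unfolding Xbar_space_def by measurable

lemma Pbar_meas: "Pbar \<pi> S J lam \<in> measurable Xbar_space (subprob_algebra Xbar_space)"
proof (rule measurable_subprob_algebra)
  fix z show "subprob_space (Pbar \<pi> S J lam z)"
    using Pbar_prob prob_space_imp_subprob_space by blast
  show "sets (Pbar \<pi> S J lam z) = sets Xbar_space" by (rule Pbar_sets)
next
  fix A :: "('y \<times> 'i \<times> real) set" assume A[measurable]: "A \<in> sets Xbar_space"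
  have F: "(\<lambda>z. (\<Sum>j\<in>UNIV. ennreal (\<pi> i j) *
     (\<integral>\<^sup>+r. ennreal (exponential_density lam r) * (\<integral>\<^sup>+v. indicator A (v, j, r + snd (snd z)) \<partial>J (Sm i r (fst z))) \<partial>lborel)))
     \<in> borel_measurable Xbar_space" for i
  proof -
    have inner: "(\<lambda>p. \<integral>\<^sup>+v. indicator A (v, j, snd p + snd (snd (fst p))) \<partial>J (Sm i (snd p) (fst (fst p))))
       \<in> borel_measurable (Xbar_space \<Otimes>\<^sub>M lborel)" for j
    proof (rule nn_integral_measurable_subprob_algebra2[where N=borel])
      show "(\<lambda>p. J (Sm i (snd p) (fst (fst p)))) \<in> measurable (Xbar_space \<Otimes>\<^sub>M lborel) (subprob_algebra borel)"
        by measurable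
      show "(\<lambda>(p, v). indicator A (v, j, snd p + snd (snd (fst p))) :: ennreal) \<in> borel_measurable ((Xbar_space \<Otimes>\<^sub>M lborel) \<Otimes>\<^sub>M borel)"
        by measurable
    qed
    show ?thesis
      using inner by measurable
  qed
  have "(\<lambda>z. (\<lambda>i z. (\<Sum>j\<in>UNIV. ennreal (\<pi> i j) *
     (\<integral>\<^sup>+r. ennreal (exponential_density lam r) * (\<integral>\<^sup>+v. indicator A (v, j, r + snd (snd z)) \<partial>J (Sm i r (fst z))) \<partial>lborel))) (fst (snd z)) z)
     \<in> borel_measurable Xbar_space"
    by (rule measurable_compose_countable[OF F]) measurable
  then show "(\<lambda>z. emeasure (Pbar \<pi> S J lam z) A) \<in> borel_measurable Xbar_space"
    by (subst measurable_cong[where g="\<lambda>z. (\<lambda>i z. (\<Sum>j\<in>UNIV. ennreal (\<pi> i j) *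
     (\<integral>\<^sup>+r. ennreal (exponential_density lam r) * (\<integral>\<^sup>+v. indicator A (v, j, r + snd (snd z)) \<partial>J (Sm i r (fst z))) \<partial>lborel))) (fst (snd z)) z"])
       (simp_all add: nn_integral_indicator[symmetric] Pbar_sets del: nn_integral_indicator, subst Pbar_integral, measurable)
qed

lemma chain_meas:
  assumes "markov_chain_kernel M Xbar_space (Pbar \<pi> S J lam) Z"
  shows "Z n \<in> measurable M Xbar_space"
  using assms by (simp add: markov_chain_kernel_def)

lemma KStep2:
  assumes MC: "markov_chain_kernel M Xbar_space (Pbar \<pi> S J lam) Z"
    and g: "g \<in> borel_measurable Xbar_space" and A: "A \<in> sets Xbar_space"
  shows "(\<integral>\<^sup>+\<omega>. g (Z n \<omega>) * indicator A (Z (Suc n) \<omega>) \<partial>M)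
       = (\<integral>\<^sup>+\<omega>. g (Z n \<omega>) * emeasure (Pbar \<pi> S J lam (Z n \<omega>)) A \<partial>M)"
proof -
  have h: "(\<lambda>x. g (x n)) \<in> borel_measurable (PiM {..n} (\<lambda>_. Xbar_space))"
    using measurable_compose[OF measurable_component_singleton[of n "{..n}" "\<lambda>_. Xbar_space"] g] by simp
  have H: "\<forall>h\<in>borel_measurable (PiM {..n} (\<lambda>_. Xbar_space)). \<forall>A\<in>sets Xbar_space.
        (\<integral>\<^sup>+ \<omega>. h (\<lambda>k\<in>{..n}. Z k \<omega>) * indicator A (Z (Suc n) \<omega>) \<partial>M) =
        (\<integral>\<^sup>+ \<omega>. h (\<lambda>k\<in>{..n}. Z k \<omega>) * emeasure (Pbar \<pi> S J lam (Z n \<omega>)) A \<partial>M)"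
    using MC unfolding markov_chain_kernel_def by blast
  from bspec[OF bspec[OF H h] A]
  have "(\<integral>\<^sup>+\<omega>. g ((\<lambda>k\<in>{..n}. Z k \<omega>) n) * indicator A (Z (Suc n) \<omega>) \<partial>M)
       = (\<integral>\<^sup>+\<omega>. g ((\<lambda>k\<in>{..n}. Z k \<omega>) n) * emeasure (Pbar \<pi> S J lam (Z n \<omega>)) A \<partial>M)"
    by simp
  then show ?thesis by simp
qed

lemma KStep:
  assumes M: "prob_space M" and MC: "markov_chain_kernel M Xbar_space (Pbar \<pi> S J lam) Z"
    and f: "f \<in> borel_measurable Xbar_space"
  shows "(\<integral>\<^sup>+\<omega>. f (Z (Suc n) \<omega>) \<partial>M) = (\<integral>\<^sup>+\<omega>. (\<integral>\<^sup>+x. f x \<partial>Pbar \<pi> S J lam (Z n \<omega>)) \<partial>M)"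
proof -
  note Zm = chain_meas[OF MC]
  have K: "(\<lambda>\<omega>. Pbar \<pi> S J lam (Z n \<omega>)) \<in> measurable M (subprob_algebra Xbar_space)"
    by (rule measurable_compose[OF Zm Pbar_meas])
  have ne: "space M \<noteq> {}" using M by (simp add: prob_space.not_empty)
  have eqm: "distr M Xbar_space (Z (Suc n)) = M \<bind> (\<lambda>\<omega>. Pbar \<pi> S J lam (Z n \<omega>))"
  proof (rule measure_eqI)
    show "sets (distr M Xbar_space (Z (Suc n))) = sets (M \<bind> (\<lambda>\<omega>. Pbar \<pi> S J lam (Z n \<omega>)))"
      using ne by (simp add: Pbar_sets)
  next
    fix A assume "A \<in> sets (distr M Xbar_space (Z (Suc n)))"
    then have A: "A \<in> sets Xbar_space" by simp
    have "emeasure (distr M Xbar_space (Z (Suc n))) A = (\<integral>\<^sup>+\<omega>. indicator A (Z (Suc n) \<omega>) \<partial>M)"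
      using A Zm by (simp add: nn_integral_indicator[symmetric] nn_integral_distr del: nn_integral_indicator)
    also have "\<dots> = (\<integral>\<^sup>+\<omega>. 1 * indicator A (Z (Suc n) \<omega>) \<partial>M)" by simp
    also have "\<dots> = (\<integral>\<^sup>+\<omega>. 1 * emeasure (Pbar \<pi> S J lam (Z n \<omega>)) A \<partial>M)"
      by (rule KStep2[OF MC _ A]) simp
    also have "\<dots> = emeasure (M \<bind> (\<lambda>\<omega>. Pbar \<pi> S J lam (Z n \<omega>))) A"
      by (simp add: emeasure_bind[OF ne K A])
    finally show "emeasure (distr M Xbar_space (Z (Suc n))) A = emeasure (M \<bind> (\<lambda>\<omega>. Pbar \<pi> S J lam (Z n \<omega>))) A" .
  qed
  have "(\<integral>\<^sup>+\<omega>. f (Z (Suc n) \<omega>) \<partial>M) = (\<integral>\<^sup>+x. f x \<partial>distr M Xbar_space (Z (Suc n)))"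
    using f Zm by (simp add: nn_integral_distr)
  also have "\<dots> = (\<integral>\<^sup>+\<omega>. (\<integral>\<^sup>+x. f x \<partial>Pbar \<pi> S J lam (Z n \<omega>)) \<partial>M)"
    unfolding eqm by (rule nn_integral_bind[OF f K])
  finally show ?thesis .
qed

end

locale pdmp2 = pdmp \<pi> S J lam
  for \<pi> :: "'i::finite \<Rightarrow> 'i \<Rightarrow> real" and S :: "'i \<Rightarrow> real \<Rightarrow> 'y::polish_space \<Rightarrow> 'y"
    and J :: "'y \<Rightarrow> 'y measure" and lam :: real +
  fixes ystar :: 'y and Mc \<zeta> L a b :: real
  assumes S1: "Mc \<ge> 0" "\<zeta> \<ge> 0" "\<And>t. t \<ge> 0 \<Longrightarrow> (MAX i\<in>UNIV. dist (S i t ystar) ystar) \<le> Mc * t powr \<zeta>"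
    and S2: "L > 0" "\<And>t y1 y2 i. t \<ge> 0 \<Longrightarrow> dist (S i t y1) (S i t y2) \<le> L * dist y1 y2"
    and J1: "a > 0" "b \<ge> 0"
      "\<And>y. (\<integral>\<^sup>+ u. ennreal ((dist u ystar)\<^sup>2) \<partial>(J y)) \<le> ennreal (a * (dist y ystar)\<^sup>2 + b)"
    and contr: "2 * a * L\<^sup>2 < 1"
begin

definition "q = 2 * a * L\<^sup>2"
definition "\<Gamma> = lam * (1 - q) / 2"
definition "\<kappa> = lam - \<Gamma>"
definition "\<theta> = \<kappa> / 2"
definition "Kc = 1 + fact (nat \<lceil>2*\<zeta>\<rceil>) / \<theta> ^ (nat \<lceil>2*\<zeta>\<rceil>)"
definition "D0 = 2 * Mc\<^sup>2 * Kc"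
definition "C1 = a * D0"
definition "q' = lam * q / \<kappa>"
definition "\<alpha> = 2 * L\<^sup>2 / (1 - q')"
definition "\<gamma> = (\<kappa> / \<Gamma>) * (D0 + \<alpha> * lam * b / \<kappa> + \<alpha> * lam * C1 / (\<kappa> - \<theta>))"
definition "\<beta> = \<gamma> * lam / \<kappa>"

lemma q_pos: "q > 0" and q_lt1: "q < 1"
  using contr J1(1) S2(1) by (auto simp: q_def)

lemma Gam_pos: "\<Gamma> > 0" using q_lt1 lam_pos by (simp add: \<Gamma>_def)
lemma kap_eq: "\<kappa> = lam * (1 + q) / 2" by (simp add: \<kappa>_def \<Gamma>_def field_simps)
lemma kap_pos: "\<kappa> > 0" unfolding kap_eq using q_pos lam_pos by simp
lemma lam_eq: "lam = \<kappa> + \<Gamma>" by (simp add: \<kappa>_def)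
lemma th_pos: "\<theta> > 0" using kap_pos by (simp add: \<theta>_def)
lemma kth_pos: "\<kappa> - \<theta> > 0" using kap_pos by (simp add: \<theta>_def)
lemma Kc_pos: "Kc > 0" using th_pos by (simp add: Kc_def add_pos_nonneg)
lemma D0_nn: "D0 \<ge> 0" using Kc_pos by (simp add: D0_def)
lemma C1_nn: "C1 \<ge> 0" using D0_nn J1(1) by (simp add: C1_def)
lemma q'_nn: "q' \<ge> 0" using q_pos lam_pos kap_pos by (simp add: q'_def)
lemma q'_lt1: "q' < 1"
proof -
  have "q' = (lam * q) / (lam * ((1 + q) / 2))" unfolding q'_def kap_eq by simp
  also have "\<dots> = q / ((1 + q) / 2)" using lam_pos by (subst mult_divide_mult_cancel_left) auto
  also have "\<dots> = 2 * q / (1 + q)" by simp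
  finally have "q' = 2 * q / (1 + q)" .
  then show ?thesis using q_pos q_lt1 by (auto simp: divide_less_eq)
qed
lemma alpha_nn: "\<alpha> \<ge> 0" using q'_lt1 by (simp add: \<alpha>_def)
lemma alpha_eq: "\<alpha> * (1 - q') = 2 * L\<^sup>2" using q'_lt1 by (simp add: \<alpha>_def)
lemma gamma_nn: "\<gamma> \<ge> 0"
  using kap_pos Gam_pos D0_nn alpha_nn lam_pos J1(2) C1_nn kth_pos by (simp add: \<gamma>_def)
lemma gamma_eq: "\<gamma> * \<Gamma> / \<kappa> = D0 + \<alpha> * lam * b / \<kappa> + \<alpha> * lam * C1 / (\<kappa> - \<theta>)"
  using kap_pos Gam_pos by (simp add: \<gamma>_def)
lemma beta_ge: "\<beta> \<ge> \<gamma>"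
proof -
  have "lam / \<kappa> \<ge> 1" using kap_pos lam_eq Gam_pos by simp
  then have "\<gamma> * 1 \<le> \<gamma> * (lam / \<kappa>)" using gamma_nn by (intro mult_left_mono) auto
  then show ?thesis by (simp add: \<beta>_def)
qed

lemma dist_S_bound:
  assumes r: "0 \<le> r"
  shows "(dist (S i r y) ystar)\<^sup>2 \<le> 2 * L\<^sup>2 * (dist y ystar)\<^sup>2 + D0 * exp (\<theta> * r)"
proof -
  have m: "dist (S i r ystar) ystar \<le> Mc * r powr \<zeta>"
    using Max_ge[of "(\<lambda>i. dist (S i r ystar) ystar) ` UNIV" "dist (S i r ystar) ystar"] S1(3)[OF r]
    by auto
  have "dist (S i r y) ystar \<le> dist (S i r y) (S i r ystar) + dist (S i r ystar) ystar"
    by (rule dist_triangle)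
  also have "\<dots> \<le> L * dist y ystar + Mc * r powr \<zeta>"
    using S2(2)[OF r, of i y ystar] m by linarith
  finally have d: "dist (S i r y) ystar \<le> L * dist y ystar + Mc * r powr \<zeta>" .
  have "(dist (S i r y) ystar)\<^sup>2 \<le> (L * dist y ystar + Mc * r powr \<zeta>)\<^sup>2"
    using d by (intro power_mono) auto
  also have "\<dots> \<le> 2 * (L * dist y ystar)\<^sup>2 + 2 * (Mc * r powr \<zeta>)\<^sup>2"
    by (smt (verit) sum_squares_bound power2_sum)
  also have "(Mc * r powr \<zeta>)\<^sup>2 = Mc\<^sup>2 * (r powr \<zeta>)\<^sup>2" by (simp add: power_mult_distrib)
  also have "\<dots> \<le> Mc\<^sup>2 * (Kc * exp (\<theta> * r))"
    unfolding Kc_def using powr_exp_bound[OF r S1(2) th_pos] by (intro mult_left_mono) auto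
  finally show ?thesis by (simp add: D0_def power_mult_distrib algebra_simps)
qed


lemma SmX_meas[measurable]:
  assumes [measurable]: "f \<in> borel_measurable Xbar_space"
  shows "(\<lambda>z. Sm (fst (snd z)) (f z) (fst z)) \<in> measurable Xbar_space borel"
proof -
  have "(\<lambda>z. (\<lambda>i z. Sm i (f z) (fst z)) (fst (snd z)) z) \<in> measurable Xbar_space borel"
    by (rule measurable_compose_countable) measurable
  then show ?thesis by simp
qed

definition Gf :: "real \<Rightarrow> 'y \<times> 'i \<times> real \<Rightarrow> ennreal" where
  "Gf t z = (if snd (snd z) \<le> t then ennreal (\<alpha> * exp (- \<Gamma> * (t - snd (snd z))) * (dist (fst z) ystar)\<^sup>2
      + \<beta> - \<gamma> * exp (- \<Gamma> * (t - snd (snd z)))) else 0)"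

definition phi :: "real \<Rightarrow> 'y \<times> 'i \<times> real \<Rightarrow> ennreal" where
  "phi t z = (if snd (snd z) \<le> t then ennreal (exp (- lam * (t - snd (snd z)))
      * (dist (Sm (fst (snd z)) (t - snd (snd z)) (fst z)) ystar)\<^sup>2) else 0)"

definition psi :: "real \<Rightarrow> 'y \<times> 'i \<times> real \<Rightarrow> ennreal" where
  "psi t z = (if snd (snd z) \<le> t then ennreal ((dist (Sm (fst (snd z)) (t - snd (snd z)) (fst z)) ystar)\<^sup>2) else 0)"

lemma Gf_meas[measurable]: "Gf t \<in> borel_measurable Xbar_space"
  unfolding Gf_def by measurable
lemma phi_meas[measurable]: "phi t \<in> borel_measurable Xbar_space"
  unfolding phi_def by measurable
lemma psi_meas[measurable]: "psi t \<in> borel_measurable Xbar_space"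
  unfolding psi_def by measurable


lemma exp_id: "exp (xx::real) * exp yy = exp (xx + yy)" by (simp add: exp_add)
lemma rl1: "(x::real) * (y * z) = (x * z) * y" by (simp add: algebra_simps)
lemma rl3: "(bb::real) * (e * (- l)) = - (bb * l * e)" by (simp add: algebra_simps)

lemma drift_pos:
  assumes st: "s \<le> t"
  shows "phi t (y, i, s) + (\<integral>\<^sup>+x. Gf t x \<partial>Pbar \<pi> S J lam (y, i, s)) \<le> Gf t (y, i, s)"
proof -
  define u where "u = t - s"
  define c where "c = (dist y ystar)\<^sup>2"
  have u: "0 \<le> u" using st by (simp add: u_def)
  have c: "0 \<le> c" by (simp add: c_def)
  define E1 where "E1 = exp (- \<Gamma> * u)"
  define E2 where "E2 = exp (- lam * u)"
  define E3 where "E3 = exp (- (lam - \<theta>) * u)"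
  define H where "H r = lam * exp (- lam * r) * (exp (- \<Gamma> * (u - r)) * (\<alpha> * (q * c + b + C1 * exp (\<theta> * r)) - \<gamma>) + \<beta>)" for r
  define F where "F r = - lam * (\<alpha> * (q * c + b) - \<gamma>) * E1 * exp (- \<kappa> * r) / \<kappa>
      - lam * \<alpha> * C1 * E1 * exp (- (\<kappa> - \<theta>) * r) / (\<kappa> - \<theta>) - \<beta> * exp (- lam * r)" for r
  have inner_nn: "0 \<le> exp (- \<Gamma> * (u - r)) * (\<alpha> * (q * c + b + C1 * exp (\<theta> * r)) - \<gamma>) + \<beta>" if "r \<le> u" for r
  proof -
    have e1: "exp (- \<Gamma> * (u - r)) \<le> 1" using that Gam_pos by simp
    have "\<gamma> * exp (- \<Gamma> * (u - r)) \<le> \<gamma>" using e1 gamma_nn by (simp add: mult_left_le)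
    moreover have "0 \<le> exp (- \<Gamma> * (u - r)) * (\<alpha> * (q * c + b + C1 * exp (\<theta> * r)))"
      using alpha_nn q_pos c J1(2) C1_nn by (intro mult_nonneg_nonneg add_nonneg_nonneg) auto
    ultimately show ?thesis using beta_ge by (simp add: algebra_simps)
  qed
  have H_nn: "0 \<le> H r" if "r \<le> u" for r
    unfolding H_def using inner_nn[OF that] lam_pos by simp
  have inner: "(\<integral>\<^sup>+v. Gf t (v, j, r + s) \<partial>J (Sm i r y))
      \<le> ennreal (exp (- \<Gamma> * (u - r)) * (\<alpha> * (q * c + b + C1 * exp (\<theta> * r)) - \<gamma>) + \<beta>)"
    if r0: "0 \<le> r" and ru: "r \<le> u" for j r
  proof -
    define e where "e = exp (- \<Gamma> * (u - r))"
    have e1: "e \<le> 1" using ru Gam_pos by (simp add: e_def)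
    have e0: "0 \<le> e" by (simp add: e_def)
    have bg: "0 \<le> \<beta> - \<gamma> * e" using e1 gamma_nn beta_ge by (smt (verit) mult_left_le)
    have ae: "0 \<le> \<alpha> * e" using alpha_nn e0 by simp
    have Geq: "Gf t (v, j, r + s) = ennreal (\<alpha> * e) * ennreal ((dist v ystar)\<^sup>2) + ennreal (\<beta> - \<gamma> * e)" for v
    proof -
      have "t - (r + s) = u - r" by (simp add: u_def)
      then have "Gf t (v, j, r + s) = ennreal (\<alpha> * e * (dist v ystar)\<^sup>2 + (\<beta> - \<gamma> * e))"
        using ru by (simp add: Gf_def e_def u_def algebra_simps)
      also have "\<dots> = ennreal (\<alpha> * e) * ennreal ((dist v ystar)\<^sup>2) + ennreal (\<beta> - \<gamma> * e)"
        using ae bg by (simp add: ennreal_plus ennreal_mult)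
      finally show ?thesis .
    qed
    have w: "Sm i r y = S i r y" using r0 by (simp add: Sm_def)
    have dm: "(\<lambda>v. ennreal ((dist v ystar)\<^sup>2)) \<in> borel_measurable (J (S i r y))"
      by (subst measurable_cong_sets[OF J_sets refl]) measurable
    have "(\<integral>\<^sup>+v. Gf t (v, j, r + s) \<partial>J (Sm i r y))
        = ennreal (\<alpha> * e) * (\<integral>\<^sup>+v. ennreal ((dist v ystar)\<^sup>2) \<partial>J (S i r y)) + ennreal (\<beta> - \<gamma> * e)"
      unfolding Geq w using dm
      by (simp add: nn_integral_add nn_integral_cmult prob_space.emeasure_space_1[OF J_prob])
    also have "\<dots> \<le> ennreal (\<alpha> * e) * ennreal (a * (dist (S i r y) ystar)\<^sup>2 + b) + ennreal (\<beta> - \<gamma> * e)"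
      by (intro add_mono mult_left_mono J1(3)) auto
    also have "\<dots> = ennreal (\<alpha> * e * (a * (dist (S i r y) ystar)\<^sup>2 + b) + (\<beta> - \<gamma> * e))"
      using ae bg J1 by (simp add: ennreal_plus ennreal_mult)
    also have "\<dots> \<le> ennreal (e * (\<alpha> * (q * c + b + C1 * exp (\<theta> * r)) - \<gamma>) + \<beta>)"
    proof (rule ennreal_leI)
      have "a * (dist (S i r y) ystar)\<^sup>2 \<le> a * (2 * L\<^sup>2 * c + D0 * exp (\<theta> * r))"
        using dist_S_bound[OF r0, of i y] J1(1) unfolding c_def by (intro mult_left_mono) auto
      also have "\<dots> = q * c + C1 * exp (\<theta> * r)" by (simp add: q_def C1_def algebra_simps)
      finally have "\<alpha> * e * (a * (dist (S i r y) ystar)\<^sup>2 + b) \<le> \<alpha> * e * (q * c + b + C1 * exp (\<theta> * r))"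
        using ae by (intro mult_left_mono) auto
      then show "\<alpha> * e * (a * (dist (S i r y) ystar)\<^sup>2 + b) + (\<beta> - \<gamma> * e) \<le> e * (\<alpha> * (q * c + b + C1 * exp (\<theta> * r)) - \<gamma>) + \<beta>"
        by (simp add: algebra_simps)
    qed
    finally show ?thesis by (simp add: e_def)
  qed
  have outer: "ennreal (exponential_density lam r) * (\<integral>\<^sup>+v. Gf t (v, j, r + s) \<partial>J (Sm i r y))
      \<le> ennreal (H r) * indicator {0..u} r" for j r
  proof (cases "0 \<le> r \<and> r \<le> u")
    case True
    then have "ennreal (exponential_density lam r) * (\<integral>\<^sup>+v. Gf t (v, j, r + s) \<partial>J (Sm i r y))
       \<le> ennreal (lam * exp (- lam * r)) * ennreal (exp (- \<Gamma> * (u - r)) * (\<alpha> * (q * c + b + C1 * exp (\<theta> * r)) - \<gamma>) + \<beta>)"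
      by (intro mult_mono inner) (auto simp: exponential_density_def mult.commute)
    also have "\<dots> = ennreal (H r)"
      using lam_pos inner_nn[of r] True by (simp add: H_def ennreal_mult)
    finally show ?thesis using True by simp
  next
    case False
    then consider "r < 0" | "u < r" by linarith
    then show ?thesis
    proof cases
      case 1 then show ?thesis by (simp add: exponential_density_def)
    next
      case 2
      then have "Gf t (v, j, r + s) = 0" for v by (simp add: Gf_def u_def)
      then show ?thesis by simp
    qed
  qed
  have Hm: "H \<in> borel_measurable borel" unfolding H_def by measurable
  have dF: "DERIV F r :> H r" for r
  proof -
    have k1: "\<kappa> \<noteq> 0" and k2: "\<kappa> - \<theta> \<noteq> 0" using kap_pos kth_pos by auto
    define A1 where "A1 = - lam * (\<alpha> * (q * c + b) - \<gamma>) * E1 / \<kappa>"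
    define A2 where "A2 = - lam * \<alpha> * C1 * E1 / (\<kappa> - \<theta>)"
    have Feq: "F = (\<lambda>r. A1 * exp (- \<kappa> * r) + A2 * exp (- (\<kappa> - \<theta>) * r) - \<beta> * exp (- lam * r))"
      unfolding F_def A1_def A2_def by (simp add: fun_eq_iff)
    have d0: "DERIV F r :> A1 * (exp (- \<kappa> * r) * (- \<kappa>)) + A2 * (exp (- (\<kappa> - \<theta>) * r) * (- (\<kappa> - \<theta>)))
        - \<beta> * (exp (- lam * r) * (- lam))"
      unfolding Feq by (auto intro!: derivative_eq_intros)
    have a1': "- (A1 * \<kappa> * exp (- \<kappa> * r)) = lam * (\<alpha> * (q * c + b) - \<gamma>) * E1 * exp (- \<kappa> * r)"
      using k1 by (simp add: A1_def)
    have a2': "- (A2 * (\<kappa> - \<theta>) * exp (- (\<kappa> - \<theta>) * r)) = lam * \<alpha> * C1 * E1 * exp (- (\<kappa> - \<theta>) * r)"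
      using k2 by (simp add: A2_def)
    have a1: "A1 * (- \<kappa>) = lam * (\<alpha> * (q * c + b) - \<gamma>) * E1" using k1 by (simp add: A1_def)
    have a2: "A2 * (- (\<kappa> - \<theta>)) = lam * \<alpha> * C1 * E1" using k2 by (simp add: A2_def field_simps)
    have eqd: "A1 * (exp (- \<kappa> * r) * (- \<kappa>)) + A2 * (exp (- (\<kappa> - \<theta>) * r) * (- (\<kappa> - \<theta>)))
        - \<beta> * (exp (- lam * r) * (- lam)) = lam * (\<alpha> * (q * c + b) - \<gamma>) * E1 * exp (- \<kappa> * r)
       + lam * \<alpha> * C1 * E1 * exp (- (\<kappa> - \<theta>) * r) + \<beta> * lam * exp (- lam * r)"
      unfolding rl3 a1' a2' diff_minus_eq_add by (rule refl)
    have "DERIV F r :> lam * (\<alpha> * (q * c + b) - \<gamma>) * E1 * exp (- \<kappa> * r)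
       + lam * \<alpha> * C1 * E1 * exp (- (\<kappa> - \<theta>) * r) + \<beta> * lam * exp (- lam * r)"
      by (rule DERIV_cong[OF d0 eqd])
    moreover have "lam * (\<alpha> * (q * c + b) - \<gamma>) * E1 * exp (- \<kappa> * r)
       + lam * \<alpha> * C1 * E1 * exp (- (\<kappa> - \<theta>) * r) + \<beta> * lam * exp (- lam * r) = H r"
    proof -
      have x1: "- lam * r + - \<Gamma> * (u - r) = - \<Gamma> * u + - \<kappa> * r" by (simp add: \<kappa>_def algebra_simps)
      have x2: "- lam * r + - \<Gamma> * (u - r) + \<theta> * r = - \<Gamma> * u + - (\<kappa> - \<theta>) * r" by (simp add: \<kappa>_def algebra_simps)
      have i1: "exp (- lam * r) * exp (- \<Gamma> * (u - r)) = E1 * exp (- \<kappa> * r)"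
        unfolding E1_def exp_id x1 by (rule refl)
      have i2: "exp (- lam * r) * exp (- \<Gamma> * (u - r)) * exp (\<theta> * r) = E1 * exp (- (\<kappa> - \<theta>) * r)"
        unfolding E1_def exp_id x2 by (rule refl)
      have Hx: "H r = lam*(\<alpha>*(q*c+b)-\<gamma>)*(exp(-lam*r)*exp(-\<Gamma>*(u-r))) + lam*\<alpha>*C1*(exp(-lam*r)*exp(-\<Gamma>*(u-r))*exp(\<theta>*r)) + \<beta>*lam*exp(-lam*r)"
        unfolding H_def by (simp add: algebra_simps)
      have x3: "- \<kappa> * r + \<theta> * r = - (\<kappa> - \<theta>) * r" by algebra
      have i3: "exp (- \<kappa> * r) * exp (\<theta> * r) = exp (- (\<kappa> - \<theta>) * r)"
        unfolding exp_id x3 by (rule refl)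
      show ?thesis unfolding Hx i1 by (simp only: mult.assoc i3)
    qed
    ultimately show ?thesis by simp
  qed
  have FTC: "(\<integral>\<^sup>+r. ennreal (H r) * indicator {0..u} r \<partial>lborel) = ennreal (F u - F 0)"
    using nn_integral_FTC_Icc[where f=H and F=F and a=0 and b=u] Hm dF H_nn u by auto
  have F_mono: "F 0 \<le> F u"
    using DERIV_nonneg_imp_nondecreasing[where a=0 and b=u and f=F] dF H_nn u by auto
  have I_le: "(\<integral>\<^sup>+x. Gf t x \<partial>Pbar \<pi> S J lam (y, i, s)) \<le> ennreal (F u - F 0)"
  proof -
    have "(\<integral>\<^sup>+x. Gf t x \<partial>Pbar \<pi> S J lam (y, i, s)) = (\<Sum>j\<in>UNIV. ennreal (\<pi> i j) *
     (\<integral>\<^sup>+r. ennreal (exponential_density lam r) * (\<integral>\<^sup>+v. Gf t (v, j, r + s) \<partial>J (Sm i r y)) \<partial>lborel))"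
      using Pbar_integral[OF Gf_meas[of t], of "(y, i, s)"] by simp
    also have "\<dots> \<le> (\<Sum>j\<in>UNIV. ennreal (\<pi> i j) * ennreal (F u - F 0))"
      unfolding FTC[symmetric]
    proof (rule sum_mono)
      fix j :: 'i
      show "ennreal (\<pi> i j) * (\<integral>\<^sup>+r. ennreal (exponential_density lam r) * (\<integral>\<^sup>+v. Gf t (v, j, r + s) \<partial>J (Sm i r y)) \<partial>lborel)
        \<le> ennreal (\<pi> i j) * (\<integral>\<^sup>+r. ennreal (H r) * indicator {0..u} r \<partial>lborel)"
        by (rule mult_left_mono[OF nn_integral_mono[OF outer]]) simp
    qed
    also have "\<dots> = (\<Sum>j\<in>UNIV. ennreal (\<pi> i j)) * ennreal (F u - F 0)"
      by (rule sum_distrib_right[symmetric])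
    also have "(\<Sum>j\<in>UNIV. ennreal (\<pi> i j)) = 1"
      using sum_ennreal[of UNIV "\<pi> i"] pi_nonneg pi_sum[of i] by simp
    finally show ?thesis by simp
  qed
  have phi_le: "phi t (y, i, s) \<le> ennreal (E2 * (2 * L\<^sup>2 * c) + D0 * E3)"
  proof -
    have "phi t (y, i, s) = ennreal (E2 * (dist (S i u y) ystar)\<^sup>2)"
      using st u by (simp add: phi_def E2_def u_def Sm_def)
    also have "\<dots> \<le> ennreal (E2 * (2 * L\<^sup>2 * c + D0 * exp (\<theta> * u)))"
      using dist_S_bound[OF u, of i y] unfolding c_def by (intro ennreal_leI mult_left_mono) (auto simp: E2_def)
    also have "E2 * (2 * L\<^sup>2 * c + D0 * exp (\<theta> * u)) = E2 * (2 * L\<^sup>2 * c) + D0 * E3"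
    proof -
      have "- lam * u + \<theta> * u = - (lam - \<theta>) * u" by (simp add: algebra_simps)
      then have "exp (- lam * u) * exp (\<theta> * u) = exp (- (lam - \<theta>) * u)" unfolding exp_id by simp
      then show ?thesis unfolding E2_def E3_def by (simp add: distrib_left mult.assoc mult.left_commute)
    qed
    finally show ?thesis .
  qed
  have Fdiff: "F u - F 0 = lam*(\<alpha>*(q*c + b) - \<gamma>)*(E1-E2)/\<kappa> + lam*\<alpha>*C1*(E1-E3)/(\<kappa>-\<theta>) + \<beta>*(1-E2)"
  proof -
    have y1: "- \<Gamma> * u + - \<kappa> * u = - lam * u" by (simp add: \<kappa>_def algebra_simps)
    have y2: "- \<Gamma> * u + - (\<kappa> - \<theta>) * u = - (lam - \<theta>) * u" by (simp add: \<kappa>_def algebra_simps)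
    have j1: "E1 * exp (- \<kappa> * u) = E2" unfolding E1_def E2_def exp_id y1 by (rule refl)
    have j2: "E1 * exp (- (\<kappa> - \<theta>) * u) = E3" unfolding E1_def E3_def exp_id y2 by (rule refl)
    have Fu: "F u = - lam * (\<alpha> * (q * c + b) - \<gamma>) * E2 / \<kappa> - (lam * \<alpha> * C1) * E3 / (\<kappa> - \<theta>) - \<beta> * exp (- lam * u)"
      unfolding F_def j1[symmetric] j2[symmetric] by (simp only: mult.assoc)
    have F0: "F 0 = - lam * (\<alpha> * (q * c + b) - \<gamma>) * E1 / \<kappa> - (lam * \<alpha> * C1) * E1 / (\<kappa> - \<theta>) - \<beta>"
      unfolding F_def by simp
    show ?thesis unfolding Fu F0 E2_def[symmetric] lin_aux by (simp only: mult.assoc)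
  qed
  have ord: "0 \<le> E2" "E2 \<le> E3" "E3 \<le> E1"
  proof -
    have p1: "0 \<le> \<theta> * u" using th_pos u by simp
    have p2: "0 \<le> (\<kappa> - \<theta>) * u" using kth_pos u by simp
    have e1: "- (lam - \<theta>) * u = - lam * u + \<theta> * u" by algebra
    have e2: "- (lam - \<theta>) * u = - \<Gamma> * u - (\<kappa> - \<theta>) * u" using lam_eq by algebra
    have q1: "- lam * u \<le> - (lam - \<theta>) * u" using p1 e1 by linarith
    have q2: "- (lam - \<theta>) * u \<le> - \<Gamma> * u" using p2 e2 by linarith
    show "0 \<le> E2" unfolding E2_def by simp
    show "E2 \<le> E3" unfolding E2_def E3_def exp_le_cancel_iff by (rule q1)
    show "E3 \<le> E1" unfolding E3_def E1_def exp_le_cancel_iff by (rule q2)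
  qed
  have R: "E2*((2 * L\<^sup>2)*c) + D0*E3 + (lam*(\<alpha>*(q*c + b) - \<gamma>)*(E1-E2)/\<kappa> + lam*\<alpha>*C1*(E1-E3)/(\<kappa>-\<theta>) + \<beta>*(1-E2))
     \<le> \<alpha>*E1*c + \<beta> - \<gamma>*E1"
    by (rule real_ineq[OF lam_eq kap_pos Gam_pos kth_pos alpha_eq q'_def \<beta>_def gamma_eq c ord alpha_nn J1(2) C1_nn D0_nn])
       (use q'_nn in auto)
  have "phi t (y, i, s) + (\<integral>\<^sup>+x. Gf t x \<partial>Pbar \<pi> S J lam (y, i, s))
      \<le> ennreal (E2 * (2 * L\<^sup>2 * c) + D0 * E3) + ennreal (F u - F 0)"
    by (intro add_mono phi_le I_le)
  also have "\<dots> = ennreal (E2 * (2 * L\<^sup>2 * c) + D0 * E3 + (F u - F 0))"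
    using F_mono ord D0_nn c by (intro ennreal_plus[symmetric]) auto
  also have "\<dots> \<le> ennreal (\<alpha>*E1*c + \<beta> - \<gamma>*E1)"
    using R unfolding Fdiff by (intro ennreal_leI) (simp add: mult.assoc)
  also have "\<dots> = Gf t (y, i, s)"
    using st by (simp add: Gf_def E1_def c_def u_def)
  finally show ?thesis .
qed


lemma drift_neg:
  assumes st: "t < s"
  shows "phi t (y, i, s) + (\<integral>\<^sup>+x. Gf t x \<partial>Pbar \<pi> S J lam (y, i, s)) \<le> Gf t (y, i, s)"
proof -
  have z: "ennreal (exponential_density lam r) * (\<integral>\<^sup>+v. Gf t (v, j, r + s) \<partial>J (Sm i r y)) = 0" for j r
  proof (cases "r < 0")
    case True then show ?thesis by (simp add: exponential_density_def)
  next
    case False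
    then have "Gf t (v, j, r + s) = 0" for v using st by (simp add: Gf_def)
    then show ?thesis by simp
  qed
  have "(\<integral>\<^sup>+x. Gf t x \<partial>Pbar \<pi> S J lam (y, i, s)) = 0"
    using Pbar_integral[OF Gf_meas[of t], of "(y, i, s)"] by (simp add: z)
  then show ?thesis using st by (simp add: phi_def Gf_def)
qed

lemma drift: "phi t z + (\<integral>\<^sup>+x. Gf t x \<partial>Pbar \<pi> S J lam z) \<le> Gf t z"
proof -
  obtain y i s where z: "z = (y, i, s)" by (cases z) auto
  show ?thesis unfolding z
    by (cases "s \<le> t") (auto intro: drift_pos drift_neg)
qed

lemma exp_tail:
  assumes u: "0 \<le> u" and l: "0 < l"
  shows "(\<integral>\<^sup>+r. ennreal (exponential_density l r) * indicator {u..} r \<partial>lborel) = ennreal (exp (- l * u))"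
proof -
  have "(\<integral>\<^sup>+r. ennreal (exponential_density l r) * indicator {u..} r \<partial>lborel) = ennreal (0 - (- exp (- l * u)))"
  proof (rule nn_integral_FTC_atLeast)
    show "exponential_density l \<in> borel_measurable borel" by measurable
    show "DERIV (\<lambda>r. - exp (- l * r)) x :> exponential_density l x" if "u \<le> x" for x
      using that u by (auto intro!: derivative_eq_intros simp: exponential_density_def mult.commute)
    show "0 \<le> exponential_density l x" for x using l by (simp add: exponential_density_def)
    show "((\<lambda>r. - exp (- l * r)) \<longlongrightarrow> 0) at_top" using l by real_asymp
  qed
  then show ?thesis by simp
qed

lemma tail_bound:
  assumes st: "s \<le> t"
  shows "emeasure (Pbar \<pi> S J lam (y, i, s)) {z. t < snd (snd z)} \<le> ennreal (exp (- lam * (t - s)))"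
proof -
  have eqA: "{z. t < snd (snd z)} = (\<lambda>z. snd (snd z)) -` {t<..} \<inter> space Xbar_space"
    by (auto simp: Xbar_space)
  have A: "{z. t < snd (snd z)} \<in> sets Xbar_space"
    unfolding eqA by (rule measurable_sets[OF Xbar_tau]) simp
  have "emeasure (Pbar \<pi> S J lam (y, i, s)) {z. t < snd (snd z)} = (\<integral>\<^sup>+x. indicator {z. t < snd (snd z)} x \<partial>Pbar \<pi> S J lam (y, i, s))"
    using A by (subst nn_integral_indicator) (simp_all add: Pbar_sets)
  also have "\<dots> = (\<Sum>j\<in>UNIV. ennreal (\<pi> i j) *
     (\<integral>\<^sup>+r. ennreal (exponential_density lam r) * (\<integral>\<^sup>+v. indicator {z. t < snd (snd z)} (v, j, r + s) \<partial>J (Sm i r y)) \<partial>lborel))"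
    using Pbar_integral[OF borel_measurable_indicator[OF A], of "(y, i, s)"] by simp
  also have "\<dots> = (\<Sum>j\<in>UNIV. ennreal (\<pi> i j) *
     (\<integral>\<^sup>+r. ennreal (exponential_density lam r) * indicator {t - s<..} r \<partial>lborel))"
    by (intro sum.cong refl arg_cong2[where f="(*)"] nn_integral_cong)
       (auto simp: prob_space.emeasure_space_1[OF J_prob] split: split_indicator)
  also have "\<dots> = (\<Sum>j\<in>UNIV. ennreal (\<pi> i j)) * (\<integral>\<^sup>+r. ennreal (exponential_density lam r) * indicator {t - s<..} r \<partial>lborel)"
    by (rule sum_distrib_right[symmetric])
  also have "(\<Sum>j\<in>UNIV. ennreal (\<pi> i j)) = 1"
    using sum_ennreal[of UNIV "\<pi> i"] pi_nonneg pi_sum[of i] by simp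
  also have "(\<integral>\<^sup>+r. ennreal (exponential_density lam r) * indicator {t - s<..} r \<partial>lborel)
      \<le> (\<integral>\<^sup>+r. ennreal (exponential_density lam r) * indicator {t - s..} r \<partial>lborel)"
    by (intro nn_integral_mono mult_left_mono) (auto split: split_indicator)
  also have "\<dots> = ennreal (exp (- lam * (t - s)))"
    using st lam_pos by (intro exp_tail) auto
  finally show ?thesis by simp
qed

lemma psi_phi:
  "psi t z * emeasure (Pbar \<pi> S J lam z) {z. t < snd (snd z)} \<le> phi t z"
proof -
  obtain y i s where z: "z = (y, i, s)" by (cases z) auto
  show ?thesis
  proof (cases "s \<le> t")
    case True
    have "psi t z * emeasure (Pbar \<pi> S J lam z) {z. t < snd (snd z)}
       \<le> psi t z * ennreal (exp (- lam * (t - s)))"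
      unfolding z by (rule mult_left_mono[OF tail_bound[OF True]]) simp
    also have "psi t z * ennreal (exp (- lam * (t - s))) = phi t z"
      using True by (simp add: z psi_def phi_def ennreal_mult mult.commute)
    finally show ?thesis .
  next
    case False then show ?thesis by (simp add: z psi_def)
  qed
qed

lemma exp_moment:
  "(\<integral>\<^sup>+x. ennreal (exp (- snd (snd x))) \<partial>Pbar \<pi> S J lam (y, i, s)) \<le> ennreal (lam / (lam + 1)) * ennreal (exp (- s))"
proof -
  have m: "(\<lambda>x. ennreal (exp (- snd (snd x)))) \<in> borel_measurable Xbar_space" by measurable
  have "(\<integral>\<^sup>+x. ennreal (exp (- snd (snd x))) \<partial>Pbar \<pi> S J lam (y, i, s)) = (\<Sum>j\<in>UNIV. ennreal (\<pi> i j) *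
     (\<integral>\<^sup>+r. ennreal (exponential_density lam r) * (\<integral>\<^sup>+v. ennreal (exp (- (r + s))) \<partial>J (Sm i r y)) \<partial>lborel))"
    using Pbar_integral[OF m, of "(y, i, s)"] by simp
  also have "\<dots> = (\<Sum>j\<in>UNIV. ennreal (\<pi> i j) *
     (\<integral>\<^sup>+r. ennreal (lam * exp (- s) * exp (- (lam + 1) * r)) * indicator {0..} r \<partial>lborel))"
    apply (rule sum.cong[OF refl])
    apply (rule arg_cong2[where f="(*)", OF refl])
    apply (rule nn_integral_cong)
    subgoal for j r
    proof -
    show "ennreal (exponential_density lam r) * (\<integral>\<^sup>+v. ennreal (exp (- (r + s))) \<partial>J (Sm i r y))
      = ennreal (lam * exp (- s) * exp (- (lam + 1) * r)) * indicator {0..} r"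
    proof (cases "0 \<le> r")
      case True
      have "exp (- r * lam) * exp (- (r + s)) = exp (- s) * exp (- (lam + 1) * r)"
        by (simp add: exp_id algebra_simps)
      then show ?thesis using True lam_pos
        by (simp add: prob_space.emeasure_space_1[OF J_prob] exponential_density_def ennreal_mult[symmetric] mult.assoc)
    qed (simp add: exponential_density_def)
  qed
  done
  also have "\<dots> = (\<Sum>j\<in>UNIV. ennreal (\<pi> i j)) * (\<integral>\<^sup>+r. ennreal (lam * exp (- s) * exp (- (lam + 1) * r)) * indicator {0..} r \<partial>lborel)"
    by (rule sum_distrib_right[symmetric])
  also have "(\<Sum>j\<in>UNIV. ennreal (\<pi> i j)) = 1"
    using sum_ennreal[of UNIV "\<pi> i"] pi_nonneg pi_sum[of i] by simp
  also have "(\<integral>\<^sup>+r. ennreal (lam * exp (- s) * exp (- (lam + 1) * r)) * indicator {0..} r \<partial>lborel)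
     = ennreal (0 - (- (lam * exp (- s)) / (lam + 1)) * exp (- (lam + 1) * 0))"
  proof (rule nn_integral_FTC_atLeast)
    show "(\<lambda>r. lam * exp (- s) * exp (- (lam + 1) * r)) \<in> borel_measurable borel" by measurable
    show "DERIV (\<lambda>r. (- (lam * exp (- s)) / (lam + 1)) * exp (- (lam + 1) * r)) x :> lam * exp (- s) * exp (- (lam + 1) * x)" for x
      using lam_pos by (intro deriv_exp_aux) auto
    show "0 \<le> lam * exp (- s) * exp (- (lam + 1) * x)" for x using lam_pos by simp
    show "((\<lambda>r. (- (lam * exp (- s)) / (lam + 1)) * exp (- (lam + 1) * r)) \<longlongrightarrow> 0) at_top"
      using lam_pos by real_asymp
  qed
  also have "\<dots> = ennreal (lam / (lam + 1)) * ennreal (exp (- s))"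
    using lam_pos by (simp add: ennreal_mult[symmetric] mult.commute)
  finally show ?thesis by simp
qed


lemma Psi_bound:
  assumes Z0: "Z 0 \<omega> = (y0, i0, 0)" and t: "0 \<le> t" and ex: "\<exists>n. t < snd (snd (Z (Suc n) \<omega>))"
  shows "ennreal ((dist (fst (Psi S Z t \<omega>)) ystar)\<^sup>2)
     \<le> (\<Sum>n. psi t (Z n \<omega>) * indicator {z. t < snd (snd z)} (Z (Suc n) \<omega>))"
proof -
  define n0 where "n0 = (LEAST n. t < snd (snd (Z (Suc n) \<omega>)))"
  have h1: "t < snd (snd (Z (Suc n0) \<omega>))" unfolding n0_def by (rule LeastI_ex[OF ex])
  have h2: "snd (snd (Z n0 \<omega>)) \<le> t"
  proof (cases n0)
    case 0 then show ?thesis using Z0 t by simp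
  next
    case (Suc m)
    then have "m < n0" by simp
    then have "\<not> t < snd (snd (Z (Suc m) \<omega>))" unfolding n0_def by (rule not_less_Least)
    then show ?thesis using Suc by simp
  qed
  obtain y i s where zn: "Z n0 \<omega> = (y, i, s)" by (cases "Z n0 \<omega>") auto
  have st: "s \<le> t" using h2 zn by simp
  have "fst (Psi S Z t \<omega>) = S i (t - s) y"
    unfolding Psi_def Let_def n0_def[symmetric] zn by simp
  then have "ennreal ((dist (fst (Psi S Z t \<omega>)) ystar)\<^sup>2) = psi t (Z n0 \<omega>) * indicator {z. t < snd (snd z)} (Z (Suc n0) \<omega>)"
    using st h1 by (simp add: zn psi_def Sm_def)
  also have "\<dots> \<le> (\<Sum>n. psi t (Z n \<omega>) * indicator {z. t < snd (snd z)} (Z (Suc n) \<omega>))"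
    by (rule term_le_suminf)
  finally show ?thesis .
qed

lemma set_tau_sets: "{z. t < snd (snd z)} \<in> sets Xbar_space"
proof -
  have eqA: "{z. t < snd (snd z)} = (\<lambda>z. snd (snd z)) -` {t<..} \<inter> space Xbar_space"
    by (auto simp: Xbar_space)
  show ?thesis unfolding eqA by (rule measurable_sets[OF Xbar_tau]) simp
qed

lemma tau_inf:
  assumes M: "prob_space M" and MC: "markov_chain_kernel M Xbar_space (Pbar \<pi> S J lam) Z"
    and Z0: "AE \<omega> in M. Z 0 \<omega> = (y0, i0, 0)"
  shows "AE \<omega> in M. \<exists>n. t < snd (snd (Z (Suc n) \<omega>))"
proof -
  interpret P: prob_space M by (rule M)
  note Zm = chain_meas[OF MC]
  define \<rho> where "\<rho> = lam / (lam + 1)"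
  have \<rho>0: "0 \<le> \<rho>" and \<rho>1: "\<rho> < 1" using lam_pos by (auto simp: \<rho>_def)
  have em: "(\<lambda>x. ennreal (exp (- snd (snd x)))) \<in> borel_measurable Xbar_space" by measurable
  have emZ: "(\<lambda>\<omega>. ennreal (exp (- snd (snd (Z n \<omega>))))) \<in> borel_measurable M" for n
    using measurable_compose[OF Zm em] by simp
  have mom: "(\<integral>\<^sup>+\<omega>. ennreal (exp (- snd (snd (Z n \<omega>)))) \<partial>M) \<le> ennreal (\<rho> ^ n)" for n
  proof (induction n)
    case 0
    have "(\<integral>\<^sup>+\<omega>. ennreal (exp (- snd (snd (Z 0 \<omega>)))) \<partial>M) = (\<integral>\<^sup>+\<omega>. 1 \<partial>M)"
      by (rule nn_integral_cong_AE) (use Z0 in auto)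
    then show ?case by (simp add: P.emeasure_space_1)
  next
    case (Suc n)
    have "(\<integral>\<^sup>+\<omega>. ennreal (exp (- snd (snd (Z (Suc n) \<omega>)))) \<partial>M)
        = (\<integral>\<^sup>+\<omega>. (\<integral>\<^sup>+x. ennreal (exp (- snd (snd x))) \<partial>Pbar \<pi> S J lam (Z n \<omega>)) \<partial>M)"
      by (rule KStep[OF M MC em])
    also have "\<dots> \<le> (\<integral>\<^sup>+\<omega>. ennreal \<rho> * ennreal (exp (- snd (snd (Z n \<omega>)))) \<partial>M)"
    proof (rule nn_integral_mono)
      fix \<omega>
      obtain y i s where "Z n \<omega> = (y, i, s)" by (cases "Z n \<omega>") auto
      then show "(\<integral>\<^sup>+x. ennreal (exp (- snd (snd x))) \<partial>Pbar \<pi> S J lam (Z n \<omega>)) \<le> ennreal \<rho> * ennreal (exp (- snd (snd (Z n \<omega>))))"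
        using exp_moment[of y i s] by (simp add: \<rho>_def)
    qed
    also have "\<dots> = ennreal \<rho> * (\<integral>\<^sup>+\<omega>. ennreal (exp (- snd (snd (Z n \<omega>)))) \<partial>M)"
      by (rule nn_integral_cmult[OF emZ])
    also have "\<dots> \<le> ennreal \<rho> * ennreal (\<rho> ^ n)"
      by (rule mult_left_mono[OF Suc.IH]) simp
    also have "\<dots> = ennreal (\<rho> ^ Suc n)" using \<rho>0 by (simp add: ennreal_mult[symmetric])
    finally show ?case .
  qed
  have tauZ[measurable]: "(\<lambda>\<omega>. snd (snd (Z n \<omega>))) \<in> borel_measurable M" for n
    using measurable_compose[OF Zm Xbar_tau] by simp
  define B where "B = {\<omega> \<in> space M. \<forall>n. snd (snd (Z (Suc n) \<omega>)) \<le> t}"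
  have Bs: "B \<in> sets M" unfolding B_def by measurable
  have Ble: "emeasure M B \<le> ennreal (exp t * \<rho> ^ Suc n)" for n
  proof -
    have "emeasure M B = (\<integral>\<^sup>+\<omega>. indicator B \<omega> \<partial>M)" using Bs by simp
    also have "\<dots> \<le> (\<integral>\<^sup>+\<omega>. ennreal (exp t) * ennreal (exp (- snd (snd (Z (Suc n) \<omega>)))) \<partial>M)"
    proof (rule nn_integral_mono)
      fix \<omega>
      show "indicator B \<omega> \<le> ennreal (exp t) * ennreal (exp (- snd (snd (Z (Suc n) \<omega>))))"
      proof (cases "\<omega> \<in> B")
        case True
        then have "snd (snd (Z (Suc n) \<omega>)) \<le> t" by (auto simp: B_def)
        then have "1 \<le> exp t * exp (- snd (snd (Z (Suc n) \<omega>)))" by (simp add: exp_id)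
        then show ?thesis using True by (simp add: ennreal_mult[symmetric])
      qed simp
    qed
    also have "\<dots> = ennreal (exp t) * (\<integral>\<^sup>+\<omega>. ennreal (exp (- snd (snd (Z (Suc n) \<omega>)))) \<partial>M)"
      by (rule nn_integral_cmult[OF emZ])
    also have "\<dots> \<le> ennreal (exp t) * ennreal (\<rho> ^ Suc n)"
      by (rule mult_left_mono[OF mom]) simp
    also have "\<dots> = ennreal (exp t * \<rho> ^ Suc n)" using \<rho>0 by (simp add: ennreal_mult[symmetric])
    finally show ?thesis .
  qed
  have mB: "measure M B \<le> exp t * \<rho> ^ Suc n" for n
    using Ble[of n] \<rho>0 by (simp add: P.emeasure_eq_measure)
  have l1: "(\<lambda>n. \<rho> ^ n) \<longlonglongrightarrow> 0" using LIMSEQ_power_zero[of \<rho>] \<rho>0 \<rho>1 by simp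
  have l2: "(\<lambda>n. \<rho> ^ Suc n) \<longlonglongrightarrow> 0" by (rule LIMSEQ_Suc[OF l1])
  have lim: "(\<lambda>n. exp t * \<rho> ^ Suc n) \<longlonglongrightarrow> 0"
    using tendsto_mult[OF tendsto_const[of "exp t"] l2] by simp
  have "measure M B \<le> 0"
    by (rule tendsto_lowerbound[OF lim]) (use mB in auto)
  then have "emeasure M B = 0" by (simp add: P.emeasure_eq_measure measure_nonneg antisym)
  then have "B \<in> null_sets M" using Bs by auto
  then show ?thesis
    by (rule AE_I') (auto simp: B_def not_less)
qed

lemma chain_bound:
  assumes M: "prob_space M" and MC: "markov_chain_kernel M Xbar_space (Pbar \<pi> S J lam) Z"
    and Z0: "AE \<omega> in M. Z 0 \<omega> = (y0, i0, 0)" and t: "0 \<le> t"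
  shows "(\<integral>\<^sup>+\<omega>. ennreal ((dist (fst (Psi S Z t \<omega>)) ystar)\<^sup>2) \<partial>M) \<le> Gf t (y0, i0, 0)"
proof -
  interpret P: prob_space M by (rule M)
  note Zm = chain_meas[OF MC]
  have GfZ: "(\<lambda>\<omega>. Gf t (Z n \<omega>)) \<in> borel_measurable M" for n
    using measurable_compose[OF Zm[of n] Gf_meas] by simp
  have phiZ: "(\<lambda>\<omega>. phi t (Z n \<omega>)) \<in> borel_measurable M" for n
    using measurable_compose[OF Zm[of n] phi_meas] by simp
  have psiZ: "(\<lambda>\<omega>. psi t (Z n \<omega>)) \<in> borel_measurable M" for n
    using measurable_compose[OF Zm[of n] psi_meas] by simp
  have KG: "(\<lambda>\<omega>. \<integral>\<^sup>+x. Gf t x \<partial>Pbar \<pi> S J lam (Z n \<omega>)) \<in> borel_measurable M" for n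
    using measurable_compose[OF measurable_compose[OF Zm Pbar_meas] nn_integral_measurable_subprob_algebra[OF Gf_meas]]
    by simp
  have step: "(\<integral>\<^sup>+\<omega>. phi t (Z n \<omega>) \<partial>M) + (\<integral>\<^sup>+\<omega>. Gf t (Z (Suc n) \<omega>) \<partial>M) \<le> (\<integral>\<^sup>+\<omega>. Gf t (Z n \<omega>) \<partial>M)" for n
  proof -
    have "(\<integral>\<^sup>+\<omega>. phi t (Z n \<omega>) \<partial>M) + (\<integral>\<^sup>+\<omega>. Gf t (Z (Suc n) \<omega>) \<partial>M)
       = (\<integral>\<^sup>+\<omega>. phi t (Z n \<omega>) \<partial>M) + (\<integral>\<^sup>+\<omega>. (\<integral>\<^sup>+x. Gf t x \<partial>Pbar \<pi> S J lam (Z n \<omega>)) \<partial>M)"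
      by (simp add: KStep[OF M MC Gf_meas])
    also have "\<dots> = (\<integral>\<^sup>+\<omega>. phi t (Z n \<omega>) + (\<integral>\<^sup>+x. Gf t x \<partial>Pbar \<pi> S J lam (Z n \<omega>)) \<partial>M)"
      by (rule nn_integral_add[OF phiZ KG, symmetric])
    also have "\<dots> \<le> (\<integral>\<^sup>+\<omega>. Gf t (Z n \<omega>) \<partial>M)"
      by (rule nn_integral_mono) (rule drift)
    finally show ?thesis .
  qed
  have G0: "(\<integral>\<^sup>+\<omega>. Gf t (Z 0 \<omega>) \<partial>M) = Gf t (y0, i0, 0)"
  proof -
    have "(\<integral>\<^sup>+\<omega>. Gf t (Z 0 \<omega>) \<partial>M) = (\<integral>\<^sup>+\<omega>. Gf t (y0, i0, 0) \<partial>M)"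
      by (rule nn_integral_cong_AE) (use Z0 in auto)
    then show ?thesis by (simp add: P.emeasure_space_1)
  qed
  have partial: "(\<Sum>k<n. \<integral>\<^sup>+\<omega>. phi t (Z k \<omega>) \<partial>M) + (\<integral>\<^sup>+\<omega>. Gf t (Z n \<omega>) \<partial>M) \<le> Gf t (y0, i0, 0)" for n
  proof (induction n)
    case 0 then show ?case by (simp add: G0)
  next
    case (Suc n)
    have "(\<Sum>k<Suc n. \<integral>\<^sup>+\<omega>. phi t (Z k \<omega>) \<partial>M) + (\<integral>\<^sup>+\<omega>. Gf t (Z (Suc n) \<omega>) \<partial>M)
      = (\<Sum>k<n. \<integral>\<^sup>+\<omega>. phi t (Z k \<omega>) \<partial>M) + ((\<integral>\<^sup>+\<omega>. phi t (Z n \<omega>) \<partial>M) + (\<integral>\<^sup>+\<omega>. Gf t (Z (Suc n) \<omega>) \<partial>M))"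
      by (simp add: add.assoc)
    also have "\<dots> \<le> (\<Sum>k<n. \<integral>\<^sup>+\<omega>. phi t (Z k \<omega>) \<partial>M) + (\<integral>\<^sup>+\<omega>. Gf t (Z n \<omega>) \<partial>M)"
      by (rule add_left_mono[OF step])
    also have "\<dots> \<le> Gf t (y0, i0, 0)" by (rule Suc.IH)
    finally show ?case .
  qed
  have sumphi: "(\<Sum>k. \<integral>\<^sup>+\<omega>. phi t (Z k \<omega>) \<partial>M) \<le> Gf t (y0, i0, 0)"
    unfolding suminf_eq_SUP
  proof (rule SUP_least)
    fix n
    have "(\<Sum>k<n. \<integral>\<^sup>+\<omega>. phi t (Z k \<omega>) \<partial>M) \<le> (\<Sum>k<n. \<integral>\<^sup>+\<omega>. phi t (Z k \<omega>) \<partial>M) + (\<integral>\<^sup>+\<omega>. Gf t (Z n \<omega>) \<partial>M)"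
      by simp
    also note partial[of n]
    finally show "(\<Sum>k<n. \<integral>\<^sup>+\<omega>. phi t (Z k \<omega>) \<partial>M) \<le> Gf t (y0, i0, 0)" .
  qed
  have AEn: "AE \<omega> in M. \<exists>n. t < snd (snd (Z (Suc n) \<omega>))" by (rule tau_inf[OF M MC Z0])
  have A: "{z. t < snd (snd z)} \<in> sets Xbar_space" by (rule set_tau_sets)
  have indZ: "(\<lambda>\<omega>. indicator {z. t < snd (snd z)} (Z (Suc n) \<omega>) :: ennreal) \<in> borel_measurable M" for n
    using measurable_compose[OF Zm[of "Suc n"] borel_measurable_indicator[OF A]] by simp
  have "(\<integral>\<^sup>+\<omega>. ennreal ((dist (fst (Psi S Z t \<omega>)) ystar)\<^sup>2) \<partial>M)
     \<le> (\<integral>\<^sup>+\<omega>. (\<Sum>n. psi t (Z n \<omega>) * indicator {z. t < snd (snd z)} (Z (Suc n) \<omega>)) \<partial>M)"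
  proof (rule nn_integral_mono_AE)
    show "AE \<omega> in M. ennreal ((dist (fst (Psi S Z t \<omega>)) ystar)\<^sup>2)
      \<le> (\<Sum>n. psi t (Z n \<omega>) * indicator {z. t < snd (snd z)} (Z (Suc n) \<omega>))"
      using AEn Z0
    proof eventually_elim
      case (elim \<omega>)
      then show ?case by (intro Psi_bound[OF _ t]) auto
    qed
  qed
  also have "\<dots> = (\<Sum>n. \<integral>\<^sup>+\<omega>. psi t (Z n \<omega>) * indicator {z. t < snd (snd z)} (Z (Suc n) \<omega>) \<partial>M)"
    by (rule nn_integral_suminf) (use psiZ indZ in measurable)
  also have "\<dots> = (\<Sum>n. \<integral>\<^sup>+\<omega>. psi t (Z n \<omega>) * emeasure (Pbar \<pi> S J lam (Z n \<omega>)) {z. t < snd (snd z)} \<partial>M)"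
    by (simp add: KStep2[OF MC psi_meas A])
  also have "\<dots> \<le> (\<Sum>n. \<integral>\<^sup>+\<omega>. phi t (Z n \<omega>) \<partial>M)"
    by (intro suminf_le nn_integral_mono psi_phi) auto
  also have "\<dots> \<le> Gf t (y0, i0, 0)" by (rule sumphi)
  finally show ?thesis .
qed

end
theorem proposition5p2:
  fixes \<pi> :: "'i::finite \<Rightarrow> 'i \<Rightarrow> real"
    and S :: "'i \<Rightarrow> real \<Rightarrow> 'y::polish_space \<Rightarrow> 'y"
    and J :: "'y \<Rightarrow> 'y measure"
    and lam :: real and ystar :: 'y
    and Mc \<zeta> L a b :: real
  assumes stoch: "\<And>i j. \<pi> i j \<ge> 0" "\<And>i. (\<Sum>j\<in>UNIV. \<pi> i j) = 1"
    and semiflow0: "\<And>i y. S i 0 y = y"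
    and semiflow: "\<And>i s t y. s \<ge> 0 \<Longrightarrow> t \<ge> 0 \<Longrightarrow> S i s (S i t y) = S i (s + t) y"
    and S_cont: "\<And>i. continuous_on ({0..} \<times> UNIV) (\<lambda>(t, y). S i t y)"
    and J_kernel: "J \<in> measurable borel (prob_algebra borel)"
    and lam_pos: "lam > 0"
    and S1: "Mc \<ge> 0" "\<zeta> \<ge> 0" "\<And>t. t \<ge> 0 \<Longrightarrow> (MAX i\<in>UNIV. dist (S i t ystar) ystar) \<le> Mc * t powr \<zeta>"
    and S2: "L > 0" "\<And>t y1 y2 i. t \<ge> 0 \<Longrightarrow> dist (S i t y1) (S i t y2) \<le> L * dist y1 y2"
    and J1: "a > 0" "b \<ge> 0"
      "\<And>y. (\<integral>\<^sup>+ u. ennreal ((dist u ystar)\<^sup>2) \<partial>(J y)) \<le> ennreal (a * (dist y ystar)\<^sup>2 + b)"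
    and contr: "2 * a * L\<^sup>2 < 1"
  shows "\<exists>A B \<Gamma>. A \<ge> 0 \<and> B \<ge> 0 \<and> \<Gamma> > 0 \<and>
    (\<forall>(M :: (nat \<Rightarrow> 'y \<times> 'i \<times> real) measure) Z (x :: 'y \<times> 'i) t.
       prob_space M \<longrightarrow>
       markov_chain_kernel M Xbar_space (Pbar \<pi> S J lam) Z \<longrightarrow>
       (AE \<omega> in M. Z 0 \<omega> = (fst x, snd x, 0)) \<longrightarrow>
       t \<ge> 0 \<longrightarrow>
       (\<integral>\<^sup>+ \<omega>. ennreal ((dist (fst (Psi S Z t \<omega>)) ystar)\<^sup>2) \<partial>M)
         \<le> ennreal (A * exp (- \<Gamma> * t) * (dist (fst x) ystar)\<^sup>2 + B))"
  proof -
  interpret pdmp2 \<pi> S J lam ystar Mc \<zeta> L a b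
    by unfold_locales (use assms in auto)
  show ?thesis
  proof (rule exI[of _ \<alpha>], rule exI[of _ \<beta>], rule exI[of _ \<Gamma>], intro conjI allI impI)
    show "0 \<le> \<alpha>" by (rule alpha_nn)
    show "0 \<le> \<beta>" using beta_ge gamma_nn by linarith
    show "0 < \<Gamma>" by (rule Gam_pos)
    fix M :: "(nat \<Rightarrow> 'y \<times> 'i \<times> real) measure" and Z and x :: "'y \<times> 'i" and t :: real
    assume M: "prob_space M" and MC: "markov_chain_kernel M Xbar_space (Pbar \<pi> S J lam) Z"
      and Z0: "AE \<omega> in M. Z 0 \<omega> = (fst x, snd x, 0)" and t: "0 \<le> t"
    have "(\<integral>\<^sup>+ \<omega>. ennreal ((dist (fst (Psi S Z t \<omega>)) ystar)\<^sup>2) \<partial>M) \<le> Gf t (fst x, snd x, 0)"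
      by (rule chain_bound[OF M MC Z0 t])
    also have "\<dots> = ennreal (\<alpha> * exp (- \<Gamma> * t) * (dist (fst x) ystar)\<^sup>2 + \<beta> - \<gamma> * exp (- \<Gamma> * t))"
      using t by (simp add: Gf_def)
    also have "\<dots> \<le> ennreal (\<alpha> * exp (- \<Gamma> * t) * (dist (fst x) ystar)\<^sup>2 + \<beta>)"
      using gamma_nn by (intro ennreal_leI) simp
    finally show "(\<integral>\<^sup>+ \<omega>. ennreal ((dist (fst (Psi S Z t \<omega>)) ystar)\<^sup>2) \<partial>M)
      \<le> ennreal (\<alpha> * exp (- \<Gamma> * t) * (dist (fst x) ystar)\<^sup>2 + \<beta>)" .
  qed
qed

end
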